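(* Let $p$ be an odd prime and $a$ an integer with $1<a<p$. Then there exists a $PComS\!\left(p,\tfrac{p-1}{2},\,2a(a-p)+\tfrac{p(p-1)}{2}\right)$ all of whose members are classes of sequences in $\mathcal{G}_p(a)$.
   Context: $\mathbb{Z}_2^p$ is the set of sequences $X=(x_0,\dots,x_{p-1})$ with entries in $\{+1,-1\}$, indices mod $p$. $\mathcal{G}_p(a)$ is the set of $X\in\mathbb{Z}_2^p$ with exactly $a$ entries equal to $+1$. The periodic autocorrelation is $\mathsf{P}_X(k)=\sum_{i=0}^{p-1}x_ix_{i+k}$; it depends only on the cyclic-shift class $X_C$. A $PComS(n,q,c)$ is a list (repetitions allowed) of $q$ cyclic-shift classes $A_{1C},\dots,A_{qC}$ with $A_i\in\mathbb{Z}_2^n$ such that $\sum_{i=1}^q\mathsf{P}_{A_i}(k)=c$ for all $1\le k\le n-1$. *)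

theory Defs
  imports Main "HOL-Computational_Algebra.Primes"
begin

definition Z2seq :: "nat \<Rightarrow> int list set" where
  "Z2seq p = {X. length X = p \<and> set X \<subseteq> {1, -1}}"

definition Gp :: "nat \<Rightarrow> nat \<Rightarrow> int list set" where
  "Gp p a = {X \<in> Z2seq p. length (filter (\<lambda>x. x = 1) X) = a}"

definition paf :: "int list \<Rightarrow> nat \<Rightarrow> int" where
  "paf X k = (\<Sum>i<length X. X ! i * X ! ((i + k) mod length X))"

definition cyc_class :: "int list \<Rightarrow> int list set" where
  "cyc_class X = {rotate k X | k. True}"

text \<open>The autocorrelation of a class
  is that of any representative (it is shift-invariant).\<close>
definition PComS :: "nat \<Rightarrow> nat \<Rightarrow> int \<Rightarrow> int list set list \<Rightarrow> bool" where
  "PComS n q c Cs \<longleftrightarrow>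
     length Cs = q \<and>
     (\<exists>As. length As = q \<and> (\<forall>i<q. As ! i \<in> Z2seq n \<and> Cs ! i = cyc_class (As ! i)) \<and>
        (\<forall>k. 1 \<le> k \<and> k \<le> n - 1 \<longrightarrow> (\<Sum>i<q. paf (As ! i) k) = c))"

end

theory Submission
  imports Defs
begin

lemma perm_sum:
  fixes F :: "nat \<Rightarrow> 'b::comm_monoid_add"
  assumes "\<forall>i<p. \<phi> i < p" "inj_on \<phi> {..<p}"
  shows "(\<Sum>i<p. F (\<phi> i)) = (\<Sum>j<p. F j)"
proof -
  have "\<phi> ` {..<p} = {..<p}"
    by (rule card_subset_eq) (use assms in \<open>auto simp: card_image\<close>)
  then show ?thesis using sum.reindex[OF assms(2), of F] by simp
qed

lemma dvd_less_eq:
  fixes i j p :: nat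
  assumes "p dvd max i j - min i j" "i < p" "j < p"
  shows "i = j"
proof -
  have "max i j - min i j < p" using assms by auto
  then have "max i j - min i j = 0" using assms(1) dvd_imp_le not_le by blast
  then show ?thesis by (auto simp: max_def min_def split: if_splits)
qed

lemma inj_shift:
  assumes "0 < (p::nat)"
  shows "inj_on (\<lambda>j. (j + m) mod p) {..<p}"
proof (rule inj_onI)
  fix i j assume ij: "i \<in> {..<p}" "j \<in> {..<p}" "(i + m) mod p = (j + m) mod p"
  have "p dvd (max i j + m) - (min i j + m)"
  proof (cases "i \<le> j")
    case True then show ?thesis using ij(3) mod_eq_dvd_iff_nat[of "i+m" "j+m" p] by (simp add: max_def min_def)
  next
    case False then show ?thesis using ij(3) mod_eq_dvd_iff_nat[of "j+m" "i+m" p] by (simp add: max_def min_def)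
  qed
  then have "p dvd max i j - min i j" by simp
  then show "i = j" using dvd_less_eq ij by blast
qed

lemma inj_mult:
  assumes "prime (p::nat)" "0 < s" "s < p"
  shows "inj_on (\<lambda>j. (s * j) mod p) {..<p}"
proof (rule inj_onI)
  fix i j assume ij: "i \<in> {..<p}" "j \<in> {..<p}" "(s * i) mod p = (s * j) mod p"
  have "p dvd s * max i j - s * min i j"
  proof (cases "i \<le> j")
    case True then show ?thesis using ij(3) mod_eq_dvd_iff_nat[of "s*i" "s*j" p] by (simp add: max_def min_def)
  next
    case False then show ?thesis using ij(3) mod_eq_dvd_iff_nat[of "s*j" "s*i" p] by (simp add: max_def min_def)
  qed
  then have "p dvd s * (max i j - min i j)" by (simp add: diff_mult_distrib2)
  moreover have "\<not> p dvd s" using assms by (simp add: nat_dvd_not_less)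
  ultimately have "p dvd max i j - min i j" using assms(1) prime_dvd_mult_iff by blast
  then show "i = j" using dvd_less_eq ij by blast
qed

definition fa :: "nat \<Rightarrow> nat \<Rightarrow> int" where "fa a j = (if j < a then 1 else -1)"
definition gg :: "nat \<Rightarrow> nat \<Rightarrow> nat \<Rightarrow> int" where
  "gg p a m = (\<Sum>j<p. fa a j * fa a ((j + m) mod p))"
definition Xs :: "nat \<Rightarrow> nat \<Rightarrow> nat \<Rightarrow> int list" where
  "Xs p a s = map (\<lambda>i. fa a (s * i mod p)) [0..<p]"

lemma paf_X:
  assumes "prime p" "0 < s" "s < p"
  shows "paf (Xs p a s) k = gg p a (s * k mod p)"
proof -
  have p0: "0 < p" using assms by auto
  have "paf (Xs p a s) k = (\<Sum>i<p. fa a (s * i mod p) * fa a (s * ((i + k) mod p) mod p))"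
    unfolding paf_def Xs_def using p0 by (intro sum.cong) auto
  also have "\<dots> = (\<Sum>i<p. (\<lambda>j. fa a j * fa a ((j + s * k mod p) mod p)) (s * i mod p))"
  proof (intro sum.cong refl)
    fix i
    have "s * ((i + k) mod p) mod p = (s * i mod p + s * k mod p) mod p"
      by (metis distrib_left mod_add_eq mod_mult_right_eq)
    then show "fa a (s * i mod p) * fa a (s * ((i + k) mod p) mod p) =
      (\<lambda>j. fa a j * fa a ((j + s * k mod p) mod p)) (s * i mod p)" by simp
  qed
  also have "\<dots> = gg p a (s * k mod p)"
    unfolding gg_def by (rule perm_sum) (use p0 inj_mult[OF assms] in auto)
  finally show ?thesis .
qed

lemma g_sym:
  assumes "0 < m" "m < p"
  shows "gg p a (p - m) = gg p a m"
proof -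
  have p0: "0 < p" using assms by auto
  have "gg p a (p - m) = (\<Sum>j<p. (\<lambda>j. fa a j * fa a ((j + (p - m)) mod p)) ((j + m) mod p))"
    unfolding gg_def by (rule perm_sum[symmetric]) (use p0 inj_shift[OF p0] in auto)
  also have "\<dots> = (\<Sum>j<p. fa a j * fa a ((j + m) mod p))"
  proof (intro sum.cong refl)
    fix j assume "j \<in> {..<p}"
    have "((j + m) mod p + (p - m)) mod p = (j + m + (p - m)) mod p" by (simp add: mod_add_left_eq)
    also have "\<dots> = (j + p) mod p" using assms by simp
    also have "\<dots> = j" using \<open>j \<in> {..<p}\<close> by simp
    finally show "(\<lambda>j. fa a j * fa a ((j + (p - m)) mod p)) ((j + m) mod p) = fa a j * fa a ((j + m) mod p)"
      by simp
  qed
  finally show ?thesis unfolding gg_def .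
qed

lemma g_total:
  assumes "0 < p"
  shows "(\<Sum>m<p. gg p a m) = (\<Sum>j<p. fa a j)^2"
proof -
  have "(\<Sum>m<p. gg p a m) = (\<Sum>j<p. fa a j * (\<Sum>m<p. fa a ((m + j) mod p)))"
    unfolding gg_def by (subst sum.swap) (simp add: sum_distrib_left add.commute)
  also have "\<dots> = (\<Sum>j<p. fa a j * (\<Sum>m<p. fa a m))"
    by (intro sum.cong refl arg_cong2[where f="(*)"] perm_sum)
       (use assms inj_shift[OF assms] in auto)
  finally show ?thesis by (simp add: power2_eq_square sum_distrib_right)
qed

lemma g0: "gg p a 0 = int p"
proof -
  have "\<And>j. fa a j * fa a j = 1" by (simp add: fa_def)
  then show ?thesis unfolding gg_def by simp
qed

lemma fsum:
  assumes "a \<le> p"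
  shows "(\<Sum>j<p. fa a j) = 2 * int a - int p"
proof -
  have se: "{..<p} = {..<a} \<union> {a..<p}" using assms by auto
  have u: "sum (fa a) ({..<a} \<union> {a..<p}) = sum (fa a) {..<a} + sum (fa a) {a..<p}"
    by (rule sum.union_disjoint) auto
  have "(\<Sum>j<p. fa a j) = (\<Sum>j<a. fa a j) + (\<Sum>j\<in>{a..<p}. fa a j)"
    using u se by metis
  also have "\<dots> = int a - int (p - a)" unfolding fa_def by simp
  finally show ?thesis using assms by simp
qed


lemma mod_refl_lemma:
  assumes "prime (p::nat)" "0 < s" "s < p" "0 < k" "k < p"
  shows "0 < s * k mod p \<and> (p - s) * k mod p = p - s * k mod p"
proof -
  have nd: "\<not> p dvd s * k" using assms by (simp add: prime_dvd_mult_iff nat_dvd_not_less)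
  then have r0: "0 < s * k mod p" by (simp add: dvd_eq_mod_eq_0)
  have p0: "0 < p" using assms by auto
  have "(p - s) * k + s * k = p * k" using assms(3) by (simp add: add_mult_distrib[symmetric])
  then have "((p - s) * k mod p + s * k mod p) mod p = 0" by (metis mod_add_eq mod_mult_self1_is_0)
  then have "p dvd (p - s) * k mod p + s * k mod p" by (simp add: dvd_eq_mod_eq_0)
  then obtain c where c: "(p - s) * k mod p + s * k mod p = p * c" by blast
  have lt: "(p - s) * k mod p + s * k mod p < 2 * p" using p0
    by (metis add_less_mono mod_less_divisor mult_2)
  have "c \<noteq> 0" using c r0 by (metis add_eq_0_iff_both_eq_0 mult_0_right not_gr0)
  moreover have "c < 2" using lt c p0 by (metis mult.commute mult_less_cancel1)
  ultimately have "c = 1" by auto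
  then show ?thesis using c r0 by auto
qed

lemma half_sum:
  assumes "prime p" "odd p" "0 < k" "k < p"
  shows "2 * (\<Sum>s\<in>{1..(p - 1) div 2}. gg p a (s * k mod p)) = (\<Sum>m<p. gg p a m) - int p"
proof -
  define h where "h = (p - 1) div 2"
  define G where "G s = gg p a (s * k mod p)" for s
  have p0: "0 < p" using assms by (simp add: prime_gt_0_nat)
  have ph: "p = 2 * h + 1" using assms(2) p0 unfolding h_def by presburger
  have A: "(\<Sum>s<p. G s) = (\<Sum>m<p. gg p a m)"
  proof -
    have "(\<Sum>s<p. G s) = (\<Sum>s<p. gg p a (k * s mod p))" unfolding G_def by (simp add: mult.commute)
    also have "\<dots> = (\<Sum>m<p. gg p a m)"
      by (rule perm_sum) (use p0 inj_mult[OF assms(1,3,4)] in auto)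
    finally show ?thesis .
  qed
  have B: "(\<Sum>s<p. G s) = int p + (\<Sum>s\<in>{1..<p}. G s)"
  proof -
    have "(\<Sum>s<p. G s) = (\<Sum>s\<in>{0..<p}. G s)" by (simp add: atLeast0LessThan)
    also have "\<dots> = G 0 + (\<Sum>s\<in>{Suc 0..<p}. G s)" using p0 by (rule sum.atLeast_Suc_lessThan)
    finally show ?thesis unfolding G_def by (simp add: g0)
  qed
  have C: "(\<Sum>s\<in>{1..<p}. G s) = (\<Sum>s\<in>{1..h}. G s) + (\<Sum>s\<in>{h+1..<p}. G s)"
  proof -
    have se: "{1..<p} = {1..h} \<union> {h+1..<p}" using ph by auto
    have u: "sum G ({1..h} \<union> {h+1..<p}) = sum G {1..h} + sum G {h+1..<p}"
      by (rule sum.union_disjoint) auto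
    show ?thesis using se u by metis
  qed
  have E: "G (p - s) = G s" if "1 \<le> s" "s < p" for s
  proof -
    have "0 < s * k mod p \<and> (p - s) * k mod p = p - s * k mod p"
      using mod_refl_lemma[OF assms(1) _ that(2) assms(3,4)] that by auto
    then show ?thesis unfolding G_def using g_sym[of "s * k mod p" p a] p0 by auto
  qed
  have D: "(\<Sum>s\<in>{h+1..<p}. G s) = (\<Sum>s\<in>{1..h}. G s)"
    by (rule sum.reindex_bij_witness[of _ "\<lambda>s. p - s" "\<lambda>s. p - s"]) (use ph E in auto)
  show ?thesis using A B C D unfolding h_def[symmetric] G_def by simp
qed

lemma card_filter_sum: "card {i. i < (p::nat) \<and> P i} = (\<Sum>i<p. if P i then 1 else 0::nat)"
proof -
  have e1: "{i. i < p \<and> P i} = {i \<in> {..<p}. P i}" by auto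
  have "card {i \<in> {..<p}. P i} = (\<Sum>i\<in>{i \<in> {..<p}. P i}. 1::nat)" by (rule card_eq_sum)
  also have "\<dots> = (\<Sum>i<p. if P i then 1 else 0::nat)" by (rule sum.inter_filter) simp
  finally show ?thesis using e1 by metis
qed

lemma Xs_Gp:
  assumes "prime p" "0 < s" "s < p" "a \<le> p"
  shows "Xs p a s \<in> Gp p a"
proof -
  have p0: "0 < p" using assms by auto
  have "length (filter (\<lambda>x. x = 1) (Xs p a s)) = card {i. i < p \<and> s * i mod p < a}"
    unfolding length_filter_conv_card Xs_def fa_def by (intro arg_cong[where f=card]) (auto split: if_splits)
  also have "\<dots> = (\<Sum>i<p. (\<lambda>j. if j < a then 1 else 0::nat) (s * i mod p))"
    by (simp add: card_filter_sum)
  also have "\<dots> = (\<Sum>j<p. if j < a then 1 else 0::nat)"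
    by (rule perm_sum) (use p0 inj_mult[OF assms(1-3)] in auto)
  also have "\<dots> = card {j. j < p \<and> j < a}" by (simp add: card_filter_sum)
  also have "\<dots> = a"
  proof -
    have "{j. j < p \<and> j < a} = {..<a}" using assms by auto
    then show ?thesis by simp
  qed
  finally show ?thesis unfolding Gp_def Z2seq_def by (auto simp: Xs_def fa_def)
qed

theorem theorem10:
  fixes p a :: nat
  assumes "prime p" and "odd p" and "1 < a" and "a < p"
  shows "\<exists>Cs. PComS p ((p - 1) div 2)
                 (2 * int a * (int a - int p) + int p * (int p - 1) div 2) Cs
            \<and> (\<forall>C\<in>set Cs. \<exists>X\<in>Gp p a. C = cyc_class X)"
proof -
  define h where "h = (p - 1) div 2"
  define As where "As = map (\<lambda>i. Xs p a (Suc i)) [0..<h]"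
  define Cs where "Cs = map cyc_class As"
  have p0: "0 < p" using assms by (simp add: prime_gt_0_nat)
  have ph: "p = 2 * h + 1" using assms(2) p0 unfolding h_def by presburger
  have inG: "As ! i \<in> Gp p a" if "i < h" for i
    unfolding As_def using that ph Xs_Gp[OF assms(1), of "Suc i" a] assms by auto
  have sums: "(\<Sum>i<h. paf (As ! i) k) = 2 * int a * (int a - int p) + int p * (int p - 1) div 2"
    if k: "1 \<le> k" "k \<le> p - 1" for k
  proof -
    have "(\<Sum>i<h. paf (As ! i) k) = (\<Sum>i<h. gg p a (Suc i * k mod p))"
      unfolding As_def by (intro sum.cong refl) (use ph assms(1) paf_X in auto)
    also have "\<dots> = (\<Sum>s\<in>{1..h}. gg p a (s * k mod p))"
      by (simp add: sum.atLeast1_atMost_eq)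
    finally have e1: "2 * (\<Sum>i<h. paf (As ! i) k) = (\<Sum>m<p. gg p a m) - int p"
      using half_sum[OF assms(1,2), of k a] k p0 unfolding h_def by auto
    have "(\<Sum>m<p. gg p a m) = (2 * int a - int p)^2"
      using g_total[OF p0] fsum[of a p] assms by simp
    with e1 have e2: "2 * (\<Sum>i<h. paf (As ! i) k) = (2 * int a - int p)^2 - int p" by simp
    have e3: "int p * (int p - 1) div 2 = int p * int h"
      using ph by simp
    show ?thesis using e2 e3 ph by (simp add: power2_eq_square algebra_simps)
  qed
  have "PComS p h (2 * int a * (int a - int p) + int p * (int p - 1) div 2) Cs"
    unfolding PComS_def
  proof (intro conjI exI[of _ As])
    show "length Cs = h" "length As = h" unfolding Cs_def As_def by auto
    show "\<forall>i<h. As ! i \<in> Z2seq p \<and> Cs ! i = cyc_class (As ! i)"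
      using inG unfolding Gp_def Cs_def by (auto simp: As_def)
    show "\<forall>k. 1 \<le> k \<and> k \<le> p - 1 \<longrightarrow> (\<Sum>i<h. paf (As ! i) k) =
        2 * int a * (int a - int p) + int p * (int p - 1) div 2" using sums by auto
  qed
  moreover have "\<forall>C\<in>set Cs. \<exists>X\<in>Gp p a. C = cyc_class X"
    using inG unfolding Cs_def by (auto simp: in_set_conv_nth As_def)
  ultimately show ?thesis unfolding h_def by blast
qed

end
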